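(* Consider the algorithm described in the context, and suppose it does not terminate finitely. Then for every $k\in\mathbb{N}$, $$\Delta q_k(s_k,\tau_k)\ge \frac{\sigma_u\tau_k}{\alpha_k}\|s_k\|_2^2+\sigma_c\big(\|c_k\|_2-\|c_k+J_kv_k\|_2\big)>0$$ and $$D_{\Phi_{\tau_k}}(x_k,s_k)\le -\frac{\sigma_u\tau_k}{\alpha_k}\|s_k\|_2^2-\sigma_c\big(\|c_k\|_2-\|c_k+J_kv_k\|_2\big)<0,$$ where $D_{\Phi_\tau}(x,s):=\lim_{t\searrow0}(\Phi_\tau(x+ts)-\Phi_\tau(x))/t$.
   Context: Problem: $\min_{x\in\mathbb{R}^n} f(x)+r(x)$ subject to $c(x)=0$, where $f:\mathbb{R}^n\to\mathbb{R}$ and $c:\mathbb{R}^n\to\mathbb{R}^m$ ($m\le n$) are continuously differentiable and $r:\mathbb{R}^n\to\mathbb{R}_{\ge 0}$ is convex. Write $g(x)=\nabla f(x)$, $J(x)=\nabla c(x)^T$, and $f_k=f(x_k)$, $g_k=g(x_k)$, $c_k=c(x_k)$, $J_k=J(x_k)$, $r_k=r(x_k)$. All norms are Euclidean. Merit function: $\Phi_\tau(x)=\tau(f(x)+r(x))+\|c(x)\|_2$. Algorithm: inputs $x_0$, $\alpha_0>0$, $\tau_{-1}>0$; constants $\kappa_v>0$, $\sigma_c,\epsilon_\tau,\xi,\eta\in(0,1)$, $\sigma_u\in(0,1/2]$, $\bar\sigma_u:=\sigma_u+\tfrac12$. For $k=0,1,\dots$: 1. If $J_k^Tc_k\ne0$,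 compute $v_k$ with $v_k\in\mathrm{Range}(J_k^T)$, $\|v_k\|_2\le\kappa_v\alpha_k\|J_k^Tc_k\|_2$, $\|c_k+J_kv_k\|_2\le\|c_k+J_kv_k^c\|_2$, where $v_k^c=-\beta_k^cJ_k^Tc_k$ with $\beta_k^c$ minimizing $\tfrac12\|c_k-\beta J_kJ_k^Tc_k\|_2^2$ over $0\le\beta\le\kappa_v\alpha_k$. Otherwise set $v_k=0$, and if $c_k\ne0$ terminate. 2. Let $u_k$ be the unique minimizer of $g_k^Tu+\tfrac1{2\alpha_k}\|u\|_2^2+r(x_k+v_k+u)$ subject to $J_ku=0$; set $s_k=v_k+u_k$. If $s_k=0$, terminate. 3. Let $D_k:=g_k^Ts_k+\bar\sigma_u\|s_k\|_2^2/\alpha_k+r(x_k+s_k)-r_k$; $\tau_{k,\mathrm{trial}}=\infty$ if $D_k\le0$, else $\tau_{k,\mathrm{trial}}=(1-\sigma_c)(\|c_k\|_2-\|c_k+J_kv_k\|_2)/D_k$. Set $\tau_k=\tau_{k-1}$ if $\tau_{k-1}\le\tau_{k,\mathrm{trial}}$, else $\tau_k=\min\{(1-\epsilon_\tau)\tau_{k-1},\tau_{k,\mathrm{trial}}\}$. 4. With $\Delta q_k(s,\tau):=-\tau(g_k^Ts+\tfrac1{2\alpha_k}\|s\|_2^2+r(x_k+s)-r_k)+\|c_k\|_2-\|c_k+J_ks\|_2$: if $\Phi_{\tau_k}(x_k+s_k)\le\Phi_{\tau_k}(x_k)-\eta\Delta q_k(s_k,\tau_k)$ set $x_{k+1}=x_k+s_k$,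 $\alpha_{k+1}=\alpha_k$; else $x_{k+1}=x_k$, $\alpha_{k+1}=\xi\alpha_k$. Standing assumption: there is an open convex set $\mathcal X$ containing all iterates $x_k$ and trial points $x_k+s_k$ such that $f$ is bounded below on $\mathcal X$, $\nabla f$ is bounded and Lipschitz continuous on $\mathcal X$, $c$ is bounded on $\mathcal X$, $J$ is bounded and Lipschitz continuous on $\mathcal X$, and all subgradients of $r$ at points of $\mathcal X$ are uniformly bounded in norm. *)

theory Defs
  imports "HOL-Analysis.Analysis"
begin

text \<open>Vectors in R^n are real^'n, constraint values in R^m are real^'m,
  the Jacobian J(x) is an m x n matrix real^'n^'m.
  J(x)^T c(x) is transpose (J x) *v c x, and J(x) s is J x *v s.\<close>

definition merit :: "(real^'n \<Rightarrow> real) \<Rightarrow> (real^'n \<Rightarrow> real) \<Rightarrow> (real^'n \<Rightarrow> real^'m)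
    \<Rightarrow> real \<Rightarrow> real^'n \<Rightarrow> real" where
  "merit f r c \<tau> x = \<tau> * (f x + r x) + norm (c x)"

definition dq :: "(real^'n \<Rightarrow> real^'n) \<Rightarrow> (real^'n \<Rightarrow> real) \<Rightarrow> (real^'n \<Rightarrow> real^'m)
    \<Rightarrow> (real^'n \<Rightarrow> real^'n^'m) \<Rightarrow> real \<Rightarrow> real^'n \<Rightarrow> real^'n \<Rightarrow> real \<Rightarrow> real" where
  "dq g r c J \<alpha> x s \<tau> =
     - \<tau> * (g x \<bullet> s + (1 / (2 * \<alpha>)) * (norm s)^2 + r (x + s) - r x)
     + norm (c x) - norm (c x + J x *v s)"

definition is_subgradient :: "(real^'n \<Rightarrow> real) \<Rightarrow> real^'n \<Rightarrow> real^'n \<Rightarrow> bool" where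
  "is_subgradient r x d \<longleftrightarrow> (\<forall>y. r y \<ge> r x + d \<bullet> (y - x))"

definition problem_data :: "(real^'n \<Rightarrow> real) \<Rightarrow> (real^'n \<Rightarrow> real^'n) \<Rightarrow> (real^'n \<Rightarrow> real^'m)
    \<Rightarrow> (real^'n \<Rightarrow> real^'n^'m) \<Rightarrow> (real^'n \<Rightarrow> real) \<Rightarrow> bool" where
  "problem_data f g c J r \<longleftrightarrow>
     (\<forall>x. (f has_derivative (\<lambda>h. g x \<bullet> h)) (at x)) \<and> continuous_on UNIV g \<and>
     (\<forall>x. (c has_derivative (\<lambda>h. J x *v h)) (at x)) \<and> continuous_on UNIV J \<and>
     CARD('m) \<le> CARD('n) \<and> convex_on UNIV r \<and> (\<forall>x. r x \<ge> 0)"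

definition standing_assumption :: "(real^'n \<Rightarrow> real) \<Rightarrow> (real^'n \<Rightarrow> real^'n) \<Rightarrow> (real^'n \<Rightarrow> real^'m)
    \<Rightarrow> (real^'n \<Rightarrow> real^'n^'m) \<Rightarrow> (real^'n \<Rightarrow> real) \<Rightarrow> (nat \<Rightarrow> real^'n) \<Rightarrow> (nat \<Rightarrow> real^'n) \<Rightarrow> bool" where
  "standing_assumption f g c J r xs ss \<longleftrightarrow>
     (\<exists>X. open X \<and> convex X \<and> (\<forall>k. xs k \<in> X \<and> xs k + ss k \<in> X) \<and>
        bdd_below (f ` X) \<and> bounded (g ` X) \<and> (\<exists>L. L-lipschitz_on X g) \<and>
        bounded (c ` X) \<and> bounded (J ` X) \<and> (\<exists>L. L-lipschitz_on X J) \<and>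
        (\<exists>B. \<forall>x\<in>X. \<forall>d. is_subgradient r x d \<longrightarrow> norm d \<le> B))"

definition normal_step_ok :: "(real^'n \<Rightarrow> real^'m) \<Rightarrow> (real^'n \<Rightarrow> real^'n^'m) \<Rightarrow> real
    \<Rightarrow> real \<Rightarrow> real^'n \<Rightarrow> real^'n \<Rightarrow> bool" where
  "normal_step_ok c J \<kappa>v \<alpha> x v \<longleftrightarrow>
     (let JTc = transpose (J x) *v c x in
      if JTc \<noteq> 0 then
        (\<exists>w. v = transpose (J x) *v w) \<and>
        norm v \<le> \<kappa>v * \<alpha> * norm JTc \<and>
        (\<exists>\<beta>. 0 \<le> \<beta> \<and> \<beta> \<le> \<kappa>v * \<alpha> \<and>
           (\<forall>\<beta>'. 0 \<le> \<beta>' \<and> \<beta>' \<le> \<kappa>v * \<alpha> \<longrightarrow>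
              (1/2) * (norm (c x - \<beta> *\<^sub>R (J x *v JTc)))^2 \<le> (1/2) * (norm (c x - \<beta>' *\<^sub>R (J x *v JTc)))^2) \<and>
           norm (c x + J x *v v) \<le> norm (c x + J x *v (- \<beta> *\<^sub>R JTc)))
      else v = 0)"

definition tangential_step_ok :: "(real^'n \<Rightarrow> real^'n) \<Rightarrow> (real^'n \<Rightarrow> real) \<Rightarrow> (real^'n \<Rightarrow> real^'n^'m)
    \<Rightarrow> real \<Rightarrow> real^'n \<Rightarrow> real^'n \<Rightarrow> real^'n \<Rightarrow> bool" where
  "tangential_step_ok g r J \<alpha> x v u \<longleftrightarrow>
     (let obj = (\<lambda>w. g x \<bullet> w + (1 / (2 * \<alpha>)) * (norm w)^2 + r (x + v + w)) in
      J x *v u = 0 \<and> (\<forall>w. J x *v w = 0 \<and> w \<noteq> u \<longrightarrow> obj u < obj w))"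

definition tau_trial :: "(real^'n \<Rightarrow> real^'n) \<Rightarrow> (real^'n \<Rightarrow> real) \<Rightarrow> (real^'n \<Rightarrow> real^'m)
    \<Rightarrow> (real^'n \<Rightarrow> real^'n^'m) \<Rightarrow> real \<Rightarrow> real \<Rightarrow> real \<Rightarrow> real^'n \<Rightarrow> real^'n \<Rightarrow> real^'n \<Rightarrow> ereal" where
  "tau_trial g r c J \<sigma>c \<sigma>u \<alpha> x v s =
     (let D = g x \<bullet> s + (\<sigma>u + 1/2) * (norm s)^2 / \<alpha> + r (x + s) - r x in
      if D \<le> 0 then \<infinity>
      else ereal ((1 - \<sigma>c) * (norm (c x) - norm (c x + J x *v v)) / D))"

definition tau_update :: "real \<Rightarrow> real \<Rightarrow> ereal \<Rightarrow> real" where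
  "tau_update \<epsilon>\<tau> \<tau>prev trial =
     (if ereal \<tau>prev \<le> trial then \<tau>prev else min ((1 - \<epsilon>\<tau>) * \<tau>prev) (real_of_ereal trial))"

text \<open>A run of the algorithm: sequences x, alpha, tau (tau_{-1} = tau0), v, u, s.\<close>
definition alg_run :: "(real^'n \<Rightarrow> real) \<Rightarrow> (real^'n \<Rightarrow> real^'n) \<Rightarrow> (real^'n \<Rightarrow> real^'m)
    \<Rightarrow> (real^'n \<Rightarrow> real^'n^'m) \<Rightarrow> (real^'n \<Rightarrow> real)
    \<Rightarrow> real \<Rightarrow> real \<Rightarrow> real \<Rightarrow> real \<Rightarrow> real \<Rightarrow> real
    \<Rightarrow> real^'n \<Rightarrow> real \<Rightarrow> real
    \<Rightarrow> (nat \<Rightarrow> real^'n) \<Rightarrow> (nat \<Rightarrow> real) \<Rightarrow> (nat \<Rightarrow> real)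
    \<Rightarrow> (nat \<Rightarrow> real^'n) \<Rightarrow> (nat \<Rightarrow> real^'n) \<Rightarrow> (nat \<Rightarrow> real^'n) \<Rightarrow> bool" where
  "alg_run f g c J r \<kappa>v \<sigma>c \<epsilon>\<tau> \<xi> \<eta> \<sigma>u x0 \<alpha>0 \<tau>0 x \<alpha> \<tau> v u s \<longleftrightarrow>
     x 0 = x0 \<and> \<alpha> 0 = \<alpha>0 \<and>
     (\<forall>k. normal_step_ok c J \<kappa>v (\<alpha> k) (x k) (v k) \<and>
          tangential_step_ok g r J (\<alpha> k) (x k) (v k) (u k) \<and>
          s k = v k + u k \<and>
          \<tau> k = tau_update \<epsilon>\<tau> (if k = 0 then \<tau>0 else \<tau> (k - 1))
                   (tau_trial g r c J \<sigma>c \<sigma>u (\<alpha> k) (x k) (v k) (s k)) \<and>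
          (if merit f r c (\<tau> k) (x k + s k)
                \<le> merit f r c (\<tau> k) (x k) - \<eta> * dq g r c J (\<alpha> k) (x k) (s k) (\<tau> k)
           then x (Suc k) = x k + s k \<and> \<alpha> (Suc k) = \<alpha> k
           else x (Suc k) = x k \<and> \<alpha> (Suc k) = \<xi> * \<alpha> k))"

text \<open>The algorithm does not terminate finitely: it never stops in Step 1
  (J^T c = 0 with c \<noteq> 0) nor in Step 2 (s = 0).\<close>
definition no_termination :: "(real^'n \<Rightarrow> real^'m) \<Rightarrow> (real^'n \<Rightarrow> real^'n^'m)
    \<Rightarrow> (nat \<Rightarrow> real^'n) \<Rightarrow> (nat \<Rightarrow> real^'n) \<Rightarrow> bool" where
  "no_termination c J x s \<longleftrightarrow>
     (\<forall>k. (transpose (J (x k)) *v c (x k) = 0 \<longrightarrow> c (x k) = 0) \<and> s k \<noteq> 0)"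

end

theory Submission
  imports Defs
begin

lemma convex_slope_lim:
  fixes h :: "real \<Rightarrow> real"
  assumes cv: "convex_on UNIV h"
  shows "\<exists>L. ((\<lambda>t. (h t - h 0)/t) \<longlongrightarrow> L) (at_right 0) \<and> L \<le> h 1 - h 0"
proof -
  let ?q = "\<lambda>t. (h t - h 0)/t"
  have mono: "?q a \<le> ?q b" if "0 < a" "a \<le> b" for a b
  proof -
    have "h ((1 - a/b) *\<^sub>R 0 + (a/b) *\<^sub>R b) \<le> (1 - a/b) * h 0 + (a/b) * h b"
      using that by (intro convex_onD[OF cv]) auto
    also have "(1 - a/b) *\<^sub>R 0 + (a/b) *\<^sub>R b = a" using that by simp
    finally have "h a \<le> (1 - a/b) * h 0 + (a/b) * h b" .
    hence "h a - h 0 \<le> (a/b) * (h b - h 0)" by (simp add: algebra_simps)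
    hence "(h a - h 0)/a \<le> ((a/b) * (h b - h 0))/a" using that by (intro divide_right_mono) auto
    also have "\<dots> = (h b - h 0)/b" using that by simp
    finally show ?thesis .
  qed
  have bnd: "h 0 - h (-1) \<le> ?q t" if "0 < t" for t
  proof -
    have "h ((1 - t/(1+t)) *\<^sub>R t + (t/(1+t)) *\<^sub>R (-1)) \<le> (1 - t/(1+t)) * h t + (t/(1+t)) * h (-1)"
      using that by (intro convex_onD[OF cv]) auto
    also have "(1 - t/(1+t)) *\<^sub>R t + (t/(1+t)) *\<^sub>R (-1) = 0" using that by (simp add: field_simps)
    also have "1 - t/(1+t) = 1/(1+t)" using that by (simp add: field_simps)
    finally have "h 0 \<le> 1/(1+t) * h t + (t/(1+t)) * h (-1)" .
    also have "1/(1+t) * h t + (t/(1+t)) * h (-1) = (h t + t * h (-1)) / (1+t)"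
      by (simp add: add_divide_distrib)
    finally have "h 0 \<le> (h t + t * h (-1)) / (1+t)" .
    hence "h 0 * (1+t) \<le> h t + t * h (-1)" using that by (simp add: pos_le_divide_eq)
    hence "(1+t) * h 0 \<le> h t + t * h (-1)" by (simp add: mult.commute)
    hence "t * (h 0 - h (-1)) \<le> h t - h 0" by (simp add: algebra_simps)
    thus ?thesis using that by (simp add: field_simps)
  qed
  have lim: "(?q \<longlongrightarrow> Inf (?q ` ({0<..} \<inter> UNIV))) (at 0 within ({0<..} \<inter> UNIV))"
    by (rule Lim_right_bound[where K = "h 0 - h (-1)"]) (auto intro: mono bnd)
  hence lim': "(?q \<longlongrightarrow> Inf (?q ` ({0<..} \<inter> UNIV))) (at_right 0)" by simp
  moreover have "Inf (?q ` ({0<..} \<inter> UNIV)) \<le> ?q 1"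
  proof (rule tendsto_upperbound[OF lim'])
    show "\<forall>\<^sub>F i in at_right 0. ?q 1 \<ge> ?q i"
      unfolding eventually_at_right_field by (intro exI[of _ 1]) (use mono[of _ 1] in auto)
  qed simp
  ultimately show ?thesis by auto
qed

lemma convex_line:
  fixes F :: "'a::real_vector \<Rightarrow> real"
  assumes "convex_on UNIV F"
  shows "convex_on UNIV (\<lambda>t::real. F (p + t *\<^sub>R q))"
proof (rule convex_onI)
  fix t x y :: real assume "0 < t" "t < 1"
  have "p + ((1 - t) *\<^sub>R x + t *\<^sub>R y) *\<^sub>R q = (1 - t) *\<^sub>R (p + x *\<^sub>R q) + t *\<^sub>R (p + y *\<^sub>R q)"
    by (simp add: algebra_simps)
  thus "F (p + ((1 - t) *\<^sub>R x + t *\<^sub>R y) *\<^sub>R q) \<le> (1 - t) * F (p + x *\<^sub>R q) + t * F (p + y *\<^sub>R q)"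
    using convex_onD[OF assms, of t] \<open>0<t\<close> \<open>t<1\<close> by simp
qed simp

lemma convex_norm_UNIV: "convex_on UNIV (norm :: 'a::real_normed_vector \<Rightarrow> real)"
proof (rule convex_onI)
  fix t :: real and x y :: 'a assume "0 < t" "t < 1"
  have "norm ((1 - t) *\<^sub>R x + t *\<^sub>R y) \<le> norm ((1 - t) *\<^sub>R x) + norm (t *\<^sub>R y)" by (rule norm_triangle_ineq)
  thus "norm ((1 - t) *\<^sub>R x + t *\<^sub>R y) \<le> (1 - t) * norm x + t * norm y"
    using \<open>0<t\<close> \<open>t<1\<close> by simp
qed simp

lemma dir_deriv_merit:
  fixes f :: "real^'n \<Rightarrow> real" and g :: "real^'n \<Rightarrow> real^'n"
    and c :: "real^'n \<Rightarrow> real^'m" and J :: "real^'n \<Rightarrow> real^'n^'m"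
    and r :: "real^'n \<Rightarrow> real"
  assumes prob: "problem_data f g c J r" and tau: "\<tau> \<ge> 0"
  shows "\<exists>D. ((\<lambda>t. (merit f r c \<tau> (x + t *\<^sub>R s) - merit f r c \<tau> x) / t) \<longlongrightarrow> D) (at_right 0) \<and>
     D \<le> \<tau> * (g x \<bullet> s + r (x + s) - r x) + norm (c x + J x *v s) - norm (c x)"
proof -
  from prob have fd: "(f has_derivative (\<lambda>h. g x \<bullet> h)) (at x)"
    and cd: "(c has_derivative (\<lambda>h. J x *v h)) (at x)"
    and rc: "convex_on UNIV r"
    unfolding problem_data_def by auto
  have d: "((\<lambda>t::real. x + t *\<^sub>R s) has_derivative (\<lambda>t. t *\<^sub>R s)) (at 0)"
    by (auto intro!: derivative_eq_intros)
  have fd': "(f has_derivative (\<lambda>h. g x \<bullet> h)) (at (x + 0 *\<^sub>R s))" using fd by simp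
  have cd': "(c has_derivative (\<lambda>h. J x *v h)) (at (x + 0 *\<^sub>R s))" using cd by simp
  have "((\<lambda>t. f (x + t *\<^sub>R s)) has_derivative (\<lambda>t. g x \<bullet> (t *\<^sub>R s))) (at 0)"
    using has_derivative_compose[OF d fd'] by simp
  moreover have "(\<lambda>t. g x \<bullet> (t *\<^sub>R s)) = (*) (g x \<bullet> s)" by (auto simp: mult.commute)
  ultimately have "((\<lambda>t. f (x + t *\<^sub>R s)) has_field_derivative (g x \<bullet> s)) (at 0)"
    by (simp add: has_field_derivative_def)
  hence "((\<lambda>t. (f (x + t *\<^sub>R s) - f (x + 0 *\<^sub>R s)) / (t - 0)) \<longlongrightarrow> g x \<bullet> s) (at 0)"
    by (simp only: has_field_derivative_iff)
  hence A: "((\<lambda>t. (f (x + t *\<^sub>R s) - f x) / t) \<longlongrightarrow> g x \<bullet> s) (at_right 0)"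
    by (auto intro: tendsto_mono[OF at_le])
  have "((\<lambda>t. c (x + t *\<^sub>R s)) has_derivative (\<lambda>t. J x *v (t *\<^sub>R s))) (at 0)"
    using has_derivative_compose[OF d cd'] by simp
  hence "((\<lambda>t. c (x + t *\<^sub>R s)) has_derivative (\<lambda>t. J x *v (t *\<^sub>R s))) (at_right 0)"
    by (rule has_derivative_at_withinI)
  hence "((\<lambda>y. ((c (x + y *\<^sub>R s) - c (x + 0 *\<^sub>R s)) - J x *v ((y - 0) *\<^sub>R s)) /\<^sub>R norm (y - 0)) \<longlongrightarrow> 0) (at_right 0)"
    by (simp only: has_derivative_at_within)
  hence "((\<lambda>y. (((c (x + y *\<^sub>R s) - c x) - y *\<^sub>R (J x *v s)) /\<^sub>R norm y)) \<longlongrightarrow> 0) (at_right 0)"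
    by (simp add: matrix_vector_mult_scaleR)
  from tendsto_norm_zero[OF this]
  have cl: "((\<lambda>y. norm (((c (x + y *\<^sub>R s) - c x) - y *\<^sub>R (J x *v s)) /\<^sub>R norm y)) \<longlongrightarrow> 0) (at_right 0)" .
  let ?E = "\<lambda>t. (norm (c (x + t *\<^sub>R s)) - norm (c x + t *\<^sub>R (J x *v s))) / t"
  have E: "(?E \<longlongrightarrow> 0) (at_right 0)"
  proof (rule Lim_null_comparison[OF _ cl])
    show "\<forall>\<^sub>F t in at_right 0. norm (?E t) \<le> norm (((c (x + t *\<^sub>R s) - c x) - t *\<^sub>R (J x *v s)) /\<^sub>R norm t)"
      using eventually_at_right_less[of "0::real"]
    proof (rule eventually_mono)
      fix t :: real assume t: "0 < t"
      have "\<bar>norm (c (x + t *\<^sub>R s)) - norm (c x + t *\<^sub>R (J x *v s))\<bar> \<le> norm (c (x + t *\<^sub>R s) - (c x + t *\<^sub>R (J x *v s)))"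
        by (rule norm_triangle_ineq3)
      hence "\<bar>norm (c (x + t *\<^sub>R s)) - norm (c x + t *\<^sub>R (J x *v s))\<bar> / t \<le> norm (c (x + t *\<^sub>R s) - (c x + t *\<^sub>R (J x *v s))) / t"
        using t by (intro divide_right_mono) auto
      moreover have "norm (((c (x + t *\<^sub>R s) - c x) - t *\<^sub>R (J x *v s)) /\<^sub>R norm t) = norm (c (x + t *\<^sub>R s) - (c x + t *\<^sub>R (J x *v s))) / t"
        using t by (simp add: divide_inverse_commute diff_diff_eq)
      moreover have "norm (?E t) = \<bar>norm (c (x + t *\<^sub>R s)) - norm (c x + t *\<^sub>R (J x *v s))\<bar> / t"
        using t by simp
      ultimately show "norm (?E t) \<le> norm (((c (x + t *\<^sub>R s) - c x) - t *\<^sub>R (J x *v s)) /\<^sub>R norm t)"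
        by linarith
    qed
  qed
  let ?h = "\<lambda>t::real. \<tau> * r (x + t *\<^sub>R s) + norm (c x + t *\<^sub>R (J x *v s))"
  have "convex_on UNIV ?h"
    by (intro convex_on_add convex_on_cmul tau convex_line rc convex_norm_UNIV)
  from convex_slope_lim[OF this] obtain L where
    L: "((\<lambda>t. (?h t - ?h 0)/t) \<longlongrightarrow> L) (at_right 0)" "L \<le> ?h 1 - ?h 0" by blast
  have "((\<lambda>t. \<tau> * ((f (x + t *\<^sub>R s) - f x) / t) + (?h t - ?h 0)/t + ?E t) \<longlongrightarrow> \<tau> * (g x \<bullet> s) + L + 0) (at_right 0)"
    by (intro tendsto_intros A L(1) E)
  moreover have "(\<lambda>t. \<tau> * ((f (x + t *\<^sub>R s) - f x) / t) + (?h t - ?h 0)/t + ?E t)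
      = (\<lambda>t. (merit f r c \<tau> (x + t *\<^sub>R s) - merit f r c \<tau> x) / t)"
    by (rule ext, simp add: merit_def diff_divide_distrib add_divide_distrib algebra_simps)
  ultimately have "((\<lambda>t. (merit f r c \<tau> (x + t *\<^sub>R s) - merit f r c \<tau> x) / t) \<longlongrightarrow> \<tau> * (g x \<bullet> s) + L + 0) (at_right 0)"
    by simp
  moreover have "\<tau> * (g x \<bullet> s) + L + 0 \<le> \<tau> * (g x \<bullet> s + r (x + s) - r x) + norm (c x + J x *v s) - norm (c x)"
    using L(2) by (simp add: algebra_simps)
  ultimately show ?thesis by blast
qed

lemma tangential_bound:
  assumes ts: "tangential_step_ok g r J \<alpha> x v u" and a0: "\<alpha> > 0" and rc: "convex_on UNIV r"
  shows "g x \<bullet> u + (norm u)^2 / \<alpha> + r (x + v + u) - r (x + v) \<le> 0"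
proof -
  define obj where "obj = (\<lambda>w. g x \<bullet> w + (1 / (2 * \<alpha>)) * (norm w)^2 + r (x + v + w))"
  from ts have Ju: "J x *v u = 0" and opt: "\<And>w. J x *v w = 0 \<Longrightarrow> w \<noteq> u \<Longrightarrow> obj u < obj w"
    unfolding tangential_step_ok_def obj_def Let_def by auto
  define a where "a = g x \<bullet> u + r (x + v + u) - r (x + v)"
  define b where "b = (norm u)^2 / (2 * \<alpha>)"
  have b0: "b \<ge> 0" using a0 by (simp add: b_def)
  have key: "a + (1 + t) * b \<le> 0" if t: "0 \<le> t" "t < 1" for t
  proof -
    have le: "obj u \<le> obj (t *\<^sub>R u)"
    proof (cases "t *\<^sub>R u = u")
      case True then show ?thesis by simp
    next
      case False
      have "J x *v (t *\<^sub>R u) = 0" by (simp add: matrix_vector_mult_scaleR Ju)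
      with opt[OF this False] show ?thesis by simp
    qed
    have "r ((1 - t) *\<^sub>R (x + v) + t *\<^sub>R (x + v + u)) \<le> (1 - t) * r (x + v) + t * r (x + v + u)"
      using t by (intro convex_onD[OF rc]) auto
    moreover have "(1 - t) *\<^sub>R (x + v) + t *\<^sub>R (x + v + u) = x + v + t *\<^sub>R u"
      by (simp add: algebra_simps)
    ultimately have rl: "r (x + v + t *\<^sub>R u) \<le> (1 - t) * r (x + v) + t * r (x + v + u)" by simp
    have "obj (t *\<^sub>R u) = t * (g x \<bullet> u) + t^2 * b + r (x + v + t *\<^sub>R u)"
      using t by (simp add: obj_def b_def power_mult_distrib)
    moreover have "obj u = g x \<bullet> u + b + r (x + v + u)" by (simp add: obj_def b_def)
    ultimately have "a + b \<le> t * a + t^2 * b" using le rl by (simp add: a_def algebra_simps)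
    moreover have "(1 - t) * (a + (1 + t) * b) = (a + b) - (t * a + t^2 * b)"
      by (simp add: algebra_simps power2_eq_square)
    ultimately have "(1 - t) * (a + (1 + t) * b) \<le> 0" by linarith
    moreover have "1 - t > 0" using t by simp
    ultimately show ?thesis by (simp add: mult_le_0_iff)
  qed
  have "a + 2 * b \<le> 0"
  proof (rule ccontr)
    assume H: "\<not> a + 2 * b \<le> 0"
    have k0: "a + b \<le> 0" using key[of 0] by simp
    hence bp: "b > 0" using H b0 by linarith
    define t where "t = 1 - (a + 2 * b) / (2 * b)"
    have "(a + 2 * b) / (2 * b) > 0" using H bp by simp
    moreover have "(a + 2 * b) / (2 * b) \<le> 1" using k0 bp by (simp add: divide_le_eq)
    ultimately have "0 \<le> t" "t < 1" by (auto simp: t_def)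
    from key[OF this] have "a + (1 + t) * b \<le> 0" .
    moreover have "a + (1 + t) * b = (a + 2 * b) / 2" using bp by (simp add: t_def field_simps)
    ultimately show False using H by simp
  qed
  thus ?thesis using a0 by (simp add: a_def b_def field_simps)
qed

lemma normal_decrease:
  fixes c :: "real^'n \<Rightarrow> real^'m" and J :: "real^'n \<Rightarrow> real^'n^'m"
  assumes ns: "normal_step_ok c J \<kappa>v \<alpha> x v" and k0: "\<kappa>v > 0" and a0: "\<alpha> > 0"
  shows "norm (c x + J x *v v) \<le> norm (c x)"
    and "norm (c x + J x *v v) = norm (c x) \<Longrightarrow> transpose (J x) *v c x = 0 \<and> v = 0"
proof -
  have strict: "norm (c x + J x *v v) < norm (c x)" if nz: "transpose (J x) *v c x \<noteq> 0"
  proof -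
    define JTc where "JTc = transpose (J x) *v c x"
    define w where "w = J x *v JTc"
    from ns nz obtain \<beta> where b: "0 \<le> \<beta>" "\<beta> \<le> \<kappa>v * \<alpha>"
      and bmin: "\<And>\<beta>'. 0 \<le> \<beta>' \<Longrightarrow> \<beta>' \<le> \<kappa>v * \<alpha> \<Longrightarrow>
              (1/2) * (norm (c x - \<beta> *\<^sub>R w))^2 \<le> (1/2) * (norm (c x - \<beta>' *\<^sub>R w))^2"
      and bv: "norm (c x + J x *v v) \<le> norm (c x + J x *v (- \<beta> *\<^sub>R JTc))"
      unfolding normal_step_ok_def Let_def JTc_def w_def by auto
    define p where "p = c x \<bullet> w"
    define q where "q = w \<bullet> w"
    have "p = JTc \<bullet> JTc"
      unfolding p_def w_def JTc_def by (simp add: dot_lmul_matrix[symmetric])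
    hence pp: "p > 0" using nz by (simp add: JTc_def)
    have wnz: "w \<noteq> 0" using pp by (auto simp: p_def)
    hence qp: "q > 0" by (simp add: q_def)
    have sq: "(norm (c x - b *\<^sub>R w))^2 = (norm (c x))^2 - 2 * b * p + b^2 * q" for b
      unfolding power2_norm_eq_inner
      by (simp add: inner_diff_left inner_diff_right p_def q_def
          inner_commute algebra_simps power2_eq_square)
    define b' where "b' = min (\<kappa>v * \<alpha>) (p / q)"
    have b'p: "b' > 0" using k0 a0 pp qp by (simp add: b'_def)
    have "b' * q \<le> p" using qp by (simp add: b'_def min_def field_simps split: if_splits)
    hence "b'^2 * q \<le> b' * p" using b'p by (simp add: power2_eq_square mult.assoc mult_left_mono)
    moreover have "b' * p > 0" using b'p pp by simp
    ultimately have "(norm (c x - b' *\<^sub>R w))^2 < (norm (c x))^2" using sq[of b']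
      by linarith
    moreover have "(norm (c x - \<beta> *\<^sub>R w))^2 \<le> (norm (c x - b' *\<^sub>R w))^2"
      using bmin[of b'] b'p by (simp add: b'_def)
    ultimately have "(norm (c x - \<beta> *\<^sub>R w))^2 < (norm (c x))^2" by linarith
    hence "norm (c x - \<beta> *\<^sub>R w) < norm (c x)" by (simp add: power_less_imp_less_base)
    moreover have "J x *v (- \<beta> *\<^sub>R JTc) = - (\<beta> *\<^sub>R w)"
      by (subst matrix_vector_mult_scaleR) (simp add: w_def)
    ultimately show ?thesis using bv by simp
  qed
  have z: "v = 0" if "transpose (J x) *v c x = 0"
    using ns that unfolding normal_step_ok_def Let_def by auto
  show "norm (c x + J x *v v) \<le> norm (c x)"
    using strict z by (cases "transpose (J x) *v c x = 0") force+
  show "norm (c x + J x *v v) = norm (c x) \<Longrightarrow> transpose (J x) *v c x = 0 \<and> v = 0"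
    using strict z by force
qed

lemma tau_step:
  assumes "\<tau>p > 0" "Dl \<ge> 0" "0 < \<epsilon>" "\<epsilon> < 1" "\<sigma>c < 1" "D > 0 \<Longrightarrow> Dl > 0"
    and tn: "\<tau>n = tau_update \<epsilon> \<tau>p (if D \<le> 0 then \<infinity> else ereal ((1 - \<sigma>c) * Dl / D))"
  shows "\<tau>n > 0 \<and> \<tau>n * D \<le> (1 - \<sigma>c) * Dl"
proof (cases "D \<le> 0")
  case True
  hence "\<tau>n = \<tau>p" using tn by (simp add: tau_update_def)
  moreover have "\<tau>p * D \<le> 0" using True assms(1) by (simp add: mult_nonneg_nonpos)
  moreover have "(1 - \<sigma>c) * Dl \<ge> 0" using assms by simp
  ultimately show ?thesis using assms(1) by simp
next
  case False
  hence Dp: "D > 0" by simp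
  define T where "T = (1 - \<sigma>c) * Dl / D"
  have Tp: "T > 0" using Dp assms(5,6) by (simp add: T_def)
  have tn': "\<tau>n = (if \<tau>p \<le> T then \<tau>p else min ((1 - \<epsilon>) * \<tau>p) T)"
    using tn False by (simp add: tau_update_def T_def)
  have "\<tau>n > 0 \<and> \<tau>n \<le> T"
    using tn' Tp assms(1,3,4) by (auto simp: min_def)
  thus ?thesis using Dp by (simp add: T_def pos_le_divide_eq)
qed

theorem lemma3p4:
  fixes f :: "real^'n \<Rightarrow> real" and g :: "real^'n \<Rightarrow> real^'n"
    and c :: "real^'n \<Rightarrow> real^'m" and J :: "real^'n \<Rightarrow> real^'n^'m"
    and r :: "real^'n \<Rightarrow> real"
    and \<kappa>v \<sigma>c \<epsilon>\<tau> \<xi> \<eta> \<sigma>u \<alpha>0 \<tau>0 :: real and x0 :: "real^'n"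
    and x v u s :: "nat \<Rightarrow> real^'n" and \<alpha> \<tau> :: "nat \<Rightarrow> real"
  assumes prob: "problem_data f g c J r"
    and params: "\<kappa>v > 0" "0 < \<sigma>c" "\<sigma>c < 1" "0 < \<epsilon>\<tau>" "\<epsilon>\<tau> < 1" "0 < \<xi>" "\<xi> < 1"
      "0 < \<eta>" "\<eta> < 1" "0 < \<sigma>u" "\<sigma>u \<le> 1/2"
    and init: "\<alpha>0 > 0" "\<tau>0 > 0"
    and run: "alg_run f g c J r \<kappa>v \<sigma>c \<epsilon>\<tau> \<xi> \<eta> \<sigma>u x0 \<alpha>0 \<tau>0 x \<alpha> \<tau> v u s"
    and nonterm: "no_termination c J x s"
    and standing: "standing_assumption f g c J r x s"
  shows "\<forall>k.
     dq g r c J (\<alpha> k) (x k) (s k) (\<tau> k)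
       \<ge> \<sigma>u * \<tau> k / \<alpha> k * (norm (s k))^2 + \<sigma>c * (norm (c (x k)) - norm (c (x k) + J (x k) *v v k)) \<and>
     \<sigma>u * \<tau> k / \<alpha> k * (norm (s k))^2 + \<sigma>c * (norm (c (x k)) - norm (c (x k) + J (x k) *v v k)) > 0 \<and>
     (\<exists>D. ((\<lambda>t. (merit f r c (\<tau> k) (x k + t *\<^sub>R s k) - merit f r c (\<tau> k) (x k)) / t) \<longlongrightarrow> D) (at_right 0) \<and>
          D \<le> - \<sigma>u * \<tau> k / \<alpha> k * (norm (s k))^2 - \<sigma>c * (norm (c (x k)) - norm (c (x k) + J (x k) *v v k)) \<and>
          - \<sigma>u * \<tau> k / \<alpha> k * (norm (s k))^2 - \<sigma>c * (norm (c (x k)) - norm (c (x k) + J (x k) *v v k)) < 0)"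
proof -
  from run have x0: "\<alpha> 0 = \<alpha>0"
    and R: "\<And>k. normal_step_ok c J \<kappa>v (\<alpha> k) (x k) (v k) \<and>
          tangential_step_ok g r J (\<alpha> k) (x k) (v k) (u k) \<and>
          s k = v k + u k \<and>
          \<tau> k = tau_update \<epsilon>\<tau> (if k = 0 then \<tau>0 else \<tau> (k - 1))
                   (tau_trial g r c J \<sigma>c \<sigma>u (\<alpha> k) (x k) (v k) (s k)) \<and>
          (if merit f r c (\<tau> k) (x k + s k)
                \<le> merit f r c (\<tau> k) (x k) - \<eta> * dq g r c J (\<alpha> k) (x k) (s k) (\<tau> k)
           then x (Suc k) = x k + s k \<and> \<alpha> (Suc k) = \<alpha> k
           else x (Suc k) = x k \<and> \<alpha> (Suc k) = \<xi> * \<alpha> k)"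
    unfolding alg_run_def by blast+
  have rc: "convex_on UNIV r" using prob unfolding problem_data_def by blast
  have apos: "\<alpha> k > 0" for k
  proof (induction k)
    case 0 then show ?case using x0 init by simp
  next
    case (Suc k)
    then show ?case using R[of k] params by (auto split: if_splits)
  qed
  define Dl where "Dl k = norm (c (x k)) - norm (c (x k) + J (x k) *v v k)" for k
  define DD where "DD k = g (x k) \<bullet> s k + (\<sigma>u + 1/2) * (norm (s k))^2 / \<alpha> k + r (x k + s k) - r (x k)" for k
  have Dl0: "Dl k \<ge> 0" for k
    using normal_decrease(1)[of c J \<kappa>v "\<alpha> k" "x k" "v k"] R[of k] params apos[of k]
    by (simp add: Dl_def)
  have DDp: "DD k > 0 \<Longrightarrow> Dl k > 0" for k
  proof (rule ccontr)
    assume H: "DD k > 0" "\<not> Dl k > 0"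
    hence "Dl k = 0" using Dl0[of k] by simp
    hence "v k = 0"
      using normal_decrease(2)[of c J \<kappa>v "\<alpha> k" "x k" "v k"] R[of k] params apos[of k]
      by (simp add: Dl_def)
    hence su: "s k = u k" using R[of k] by simp
    have tb: "g (x k) \<bullet> u k + (norm (u k))^2 / \<alpha> k + r (x k + v k + u k) - r (x k + v k) \<le> 0"
      using tangential_bound[of g r J "\<alpha> k" "x k" "v k" "u k"] R[of k] apos[of k] rc by blast
    have "(\<sigma>u + 1/2) * ((norm (s k))^2 / \<alpha> k) \<le> 1 * ((norm (s k))^2 / \<alpha> k)"
      using params apos[of k] by (intro mult_right_mono) auto
    hence "DD k \<le> 0" using tb su \<open>v k = 0\<close> by (simp add: DD_def)
    thus False using H by simp
  qed
  have tr: "tau_trial g r c J \<sigma>c \<sigma>u (\<alpha> k) (x k) (v k) (s k)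
      = (if DD k \<le> 0 then \<infinity> else ereal ((1 - \<sigma>c) * Dl k / DD k))" for k
    by (simp add: tau_trial_def DD_def Dl_def Let_def)
  have tpos: "\<tau> k > 0 \<and> \<tau> k * DD k \<le> (1 - \<sigma>c) * Dl k" for k
  proof (induction k)
    case 0
    show ?case
      by (rule tau_step[where \<tau>p = \<tau>0 and \<epsilon> = \<epsilon>\<tau>]) (use init params Dl0 DDp R[of 0] tr[of 0] in auto)
  next
    case (Suc k)
    show ?case
      by (rule tau_step[where \<tau>p = "\<tau> k" and \<epsilon> = \<epsilon>\<tau>]) (use Suc.IH params Dl0 DDp R[of "Suc k"] tr[of "Suc k"] in auto)
  qed
  show ?thesis
  proof
    fix k
    define N where "N = (norm (s k))^2"
    have Np: "N > 0" using nonterm unfolding no_termination_def N_def by auto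
    have ak: "\<alpha> k > 0" by (rule apos)
    have tk: "\<tau> k > 0" "\<tau> k * DD k \<le> (1 - \<sigma>c) * Dl k" using tpos[of k] by auto
    have Js: "J (x k) *v s k = J (x k) *v v k"
      using R[of k] unfolding tangential_step_ok_def Let_def by (auto simp: matrix_vector_right_distrib)
    have dqe: "dq g r c J (\<alpha> k) (x k) (s k) (\<tau> k) = \<sigma>u * \<tau> k / \<alpha> k * N + Dl k - \<tau> k * DD k"
      using ak unfolding dq_def Js Dl_def DD_def N_def by (simp add: field_simps)
    have c1: "dq g r c J (\<alpha> k) (x k) (s k) (\<tau> k) \<ge> \<sigma>u * \<tau> k / \<alpha> k * N + \<sigma>c * Dl k"
      using dqe tk by (simp add: algebra_simps)
    have "\<sigma>u * \<tau> k / \<alpha> k * N > 0" using params tk ak Np by simp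
    moreover have "\<sigma>c * Dl k \<ge> 0" using params Dl0[of k] by simp
    ultimately have c2: "\<sigma>u * \<tau> k / \<alpha> k * N + \<sigma>c * Dl k > 0" by linarith
    obtain D where D: "((\<lambda>t. (merit f r c (\<tau> k) (x k + t *\<^sub>R s k) - merit f r c (\<tau> k) (x k)) / t) \<longlongrightarrow> D) (at_right 0)"
      "D \<le> \<tau> k * (g (x k) \<bullet> s k + r (x k + s k) - r (x k)) + norm (c (x k) + J (x k) *v s k) - norm (c (x k))"
      using dir_deriv_merit[OF prob, of "\<tau> k" "x k" "s k"] tk by auto
    have "\<tau> k * (g (x k) \<bullet> s k + r (x k + s k) - r (x k)) + norm (c (x k) + J (x k) *v s k) - norm (c (x k))
        = - dq g r c J (\<alpha> k) (x k) (s k) (\<tau> k) - \<tau> k * N / (2 * \<alpha> k)"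
      unfolding dq_def N_def by (simp add: algebra_simps)
    moreover have "\<tau> k * N / (2 * \<alpha> k) \<ge> 0" using tk ak Np by simp
    ultimately have "D \<le> - \<sigma>u * \<tau> k / \<alpha> k * N - \<sigma>c * Dl k" using D(2) c1 by simp
    moreover have "- \<sigma>u * \<tau> k / \<alpha> k * N - \<sigma>c * Dl k < 0" using c2 by simp
    ultimately show "dq g r c J (\<alpha> k) (x k) (s k) (\<tau> k)
       \<ge> \<sigma>u * \<tau> k / \<alpha> k * (norm (s k))^2 + \<sigma>c * (norm (c (x k)) - norm (c (x k) + J (x k) *v v k)) \<and>
     \<sigma>u * \<tau> k / \<alpha> k * (norm (s k))^2 + \<sigma>c * (norm (c (x k)) - norm (c (x k) + J (x k) *v v k)) > 0 \<and>
     (\<exists>D. ((\<lambda>t. (merit f r c (\<tau> k) (x k + t *\<^sub>R s k) - merit f r c (\<tau> k) (x k)) / t) \<longlongrightarrow> D) (at_right 0) \<and>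
          D \<le> - \<sigma>u * \<tau> k / \<alpha> k * (norm (s k))^2 - \<sigma>c * (norm (c (x k)) - norm (c (x k) + J (x k) *v v k)) \<and>
          - \<sigma>u * \<tau> k / \<alpha> k * (norm (s k))^2 - \<sigma>c * (norm (c (x k)) - norm (c (x k) + J (x k) *v v k)) < 0)"
      using c1 c2 D(1) unfolding N_def Dl_def by blast
  qed
qed

end
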